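(* For any graph $G$ with no isolated vertex, order $n$ and maximum degree $\Delta$, $$\left\lceil\frac{2n}{\Delta+1}\right\rceil\le\gamma_{(2,1,0)}(G)\le\min\{\gamma_{\times2}(G)-|L(G)|+|S(G)|,\;2\gamma(G)\}.$$
   Context: All graphs are finite and simple; $N(v)$ is the open neighbourhood and $N[v]=N(v)\cup\{v\}$. $\gamma_{(2,1,0)}(G)$ is the minimum of $\sum_v f(v)$ over functions $f:V(G)\to\{0,1,2\}$ such that $\sum_{u\in N(v)}f(u)\ge2$ whenever $f(v)=0$ and $\sum_{u\in N(v)}f(u)\ge1$ whenever $f(v)=1$. $\gamma(G)$ is the domination number and $\gamma_{\times2}(G)$ is the minimum size of $D\subseteq V(G)$ with $|N[v]\cap D|\ge2$ for every $v\in V(G)$. $L(G)$ is the set of leaves (degree-one vertices) and $S(G)$ the set of support vertices (vertices adjacent to a leaf). *)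

theory Defs
  imports Complex_Main
begin

definition simple_graph :: "'a set \<Rightarrow> ('a \<Rightarrow> 'a \<Rightarrow> bool) \<Rightarrow> bool" where
  "simple_graph V E \<longleftrightarrow> finite V \<and> (\<forall>u v. E u v \<longrightarrow> u \<in> V \<and> v \<in> V)
     \<and> (\<forall>u v. E u v \<longrightarrow> E v u) \<and> (\<forall>v. \<not> E v v)"

definition nbhd :: "'a set \<Rightarrow> ('a \<Rightarrow> 'a \<Rightarrow> bool) \<Rightarrow> 'a \<Rightarrow> 'a set" where
  "nbhd V E v = {u \<in> V. E v u}"

definition cnbhd :: "'a set \<Rightarrow> ('a \<Rightarrow> 'a \<Rightarrow> bool) \<Rightarrow> 'a \<Rightarrow> 'a set" where
  "cnbhd V E v = insert v (nbhd V E v)"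

definition degree :: "'a set \<Rightarrow> ('a \<Rightarrow> 'a \<Rightarrow> bool) \<Rightarrow> 'a \<Rightarrow> nat" where
  "degree V E v = card (nbhd V E v)"

definition max_degree :: "'a set \<Rightarrow> ('a \<Rightarrow> 'a \<Rightarrow> bool) \<Rightarrow> nat" where
  "max_degree V E = Max (degree V E ` V)"

definition no_isolated :: "'a set \<Rightarrow> ('a \<Rightarrow> 'a \<Rightarrow> bool) \<Rightarrow> bool" where
  "no_isolated V E \<longleftrightarrow> (\<forall>v \<in> V. nbhd V E v \<noteq> {})"

definition leaves :: "'a set \<Rightarrow> ('a \<Rightarrow> 'a \<Rightarrow> bool) \<Rightarrow> 'a set" where
  "leaves V E = {v \<in> V. degree V E v = 1}"

definition supports :: "'a set \<Rightarrow> ('a \<Rightarrow> 'a \<Rightarrow> bool) \<Rightarrow> 'a set" where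
  "supports V E = {v \<in> V. \<exists>u \<in> leaves V E. E v u}"

definition dominating_set :: "'a set \<Rightarrow> ('a \<Rightarrow> 'a \<Rightarrow> bool) \<Rightarrow> 'a set \<Rightarrow> bool" where
  "dominating_set V E D \<longleftrightarrow> D \<subseteq> V \<and> (\<forall>v \<in> V. cnbhd V E v \<inter> D \<noteq> {})"

definition domination_number :: "'a set \<Rightarrow> ('a \<Rightarrow> 'a \<Rightarrow> bool) \<Rightarrow> nat" where
  "domination_number V E = Min {card D | D. dominating_set V E D}"

definition double_dominating_set :: "'a set \<Rightarrow> ('a \<Rightarrow> 'a \<Rightarrow> bool) \<Rightarrow> 'a set \<Rightarrow> bool" where
  "double_dominating_set V E D \<longleftrightarrow> D \<subseteq> V \<and> (\<forall>v \<in> V. card (cnbhd V E v \<inter> D) \<ge> 2)"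

definition double_domination_number :: "'a set \<Rightarrow> ('a \<Rightarrow> 'a \<Rightarrow> bool) \<Rightarrow> nat" where
  "double_domination_number V E = Min {card D | D. double_dominating_set V E D}"

definition dom210_function :: "'a set \<Rightarrow> ('a \<Rightarrow> 'a \<Rightarrow> bool) \<Rightarrow> ('a \<Rightarrow> nat) \<Rightarrow> bool" where
  "dom210_function V E f \<longleftrightarrow> (\<forall>v \<in> V. f v \<le> 2
      \<and> (f v = 0 \<longrightarrow> (\<Sum>u \<in> nbhd V E v. f u) \<ge> 2)
      \<and> (f v = 1 \<longrightarrow> (\<Sum>u \<in> nbhd V E v. f u) \<ge> 1))"

definition dom210_number :: "'a set \<Rightarrow> ('a \<Rightarrow> 'a \<Rightarrow> bool) \<Rightarrow> nat" where
  "dom210_number V E = Min {(\<Sum>v \<in> V. f v) | f. dom210_function V E f}"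

end

theory Submission
  imports Defs
begin

lemma fin210:
  assumes "simple_graph V E"
  shows "finite {(\<Sum>v \<in> V. f v) | f. dom210_function V E f}"
proof -
  have "{(\<Sum>v \<in> V. f v) | f. dom210_function V E f} \<subseteq> {..2 * card V}"
  proof
    fix x assume "x \<in> {(\<Sum>v \<in> V. f v) | f. dom210_function V E f}"
    then obtain f where f: "dom210_function V E f" "x = (\<Sum>v \<in> V. f v)" by auto
    have "(\<Sum>v \<in> V. f v) \<le> (\<Sum>v \<in> V. 2)"
      by (rule sum_mono) (use f(1) in \<open>auto simp: dom210_function_def\<close>)
    then show "x \<in> {..2 * card V}" using f(2) by auto
  qed
  then show ?thesis using finite_subset by blast
qed

lemma le210:
  assumes "simple_graph V E" "dom210_function V E f"
  shows "dom210_number V E \<le> (\<Sum>v \<in> V. f v)"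
  unfolding dom210_number_def
  using fin210[OF assms(1)] assms(2) by (intro Min_le) auto

lemma ex210:
  assumes "simple_graph V E"
  shows "\<exists>f. dom210_function V E f \<and> dom210_number V E = (\<Sum>v \<in> V. f v)"
proof -
  have "dom210_function V E (\<lambda>_. 2)" by (auto simp: dom210_function_def)
  then have ne: "{(\<Sum>v \<in> V. f v) | f. dom210_function V E f} \<noteq> {}" by blast
  have "dom210_number V E \<in> {(\<Sum>v \<in> V. f v) | f. dom210_function V E f}"
    unfolding dom210_number_def using fin210[OF assms] ne by (rule Min_in)
  then show ?thesis by auto
qed

lemma swap_nb:
  assumes "simple_graph V E"
  shows "(\<Sum>v \<in> V. \<Sum>u \<in> nbhd V E v. f u) = (\<Sum>u \<in> V. f u * degree V E u)"
proof -
  have fin: "finite V" using assms by (simp add: simple_graph_def)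
  have "(\<Sum>v \<in> V. \<Sum>u \<in> nbhd V E v. f u) = (\<Sum>v \<in> V. \<Sum>u \<in> V. if E v u then f u else 0)"
    unfolding nbhd_def by (simp add: sum.inter_filter fin)
  also have "\<dots> = (\<Sum>u \<in> V. \<Sum>v \<in> V. if E v u then f u else 0)"
    by (rule sum.swap)
  also have "\<dots> = (\<Sum>u \<in> V. f u * card {v \<in> V. E v u})"
    by (simp add: sum.inter_filter[symmetric] fin mult.commute)
  also have "\<dots> = (\<Sum>u \<in> V. f u * degree V E u)"
  proof (rule sum.cong)
    fix u assume "u \<in> V"
    have "{v \<in> V. E v u} = nbhd V E u" using assms unfolding nbhd_def simple_graph_def by blast
    then show "f u * card {v \<in> V. E v u} = f u * degree V E u" by (simp add: degree_def)
  qed simp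
  finally show ?thesis .
qed

lemma lower:
  assumes "simple_graph V E" "dom210_function V E f"
  shows "2 * card V \<le> (max_degree V E + 1) * (\<Sum>v \<in> V. f v)"
proof -
  have fin: "finite V" using assms by (simp add: simple_graph_def)
  have "2 * card V = (\<Sum>v \<in> V. 2::nat)" by simp
  also have "\<dots> \<le> (\<Sum>v \<in> V. f v + (\<Sum>u \<in> nbhd V E v. f u))"
  proof (rule sum_mono)
    fix v assume "v \<in> V"
    then have "f v \<le> 2" "f v = 0 \<longrightarrow> 2 \<le> (\<Sum>u \<in> nbhd V E v. f u)"
      "f v = 1 \<longrightarrow> 1 \<le> (\<Sum>u \<in> nbhd V E v. f u)"
      using assms(2) unfolding dom210_function_def by auto
    then show "2 \<le> f v + (\<Sum>u \<in> nbhd V E v. f u)"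
      by (cases "f v = 0"; cases "f v = 1"; simp)
  qed
  also have "\<dots> = (\<Sum>v \<in> V. f v) + (\<Sum>u \<in> V. f u * degree V E u)"
    by (simp add: sum.distrib swap_nb[OF assms(1)])
  also have "(\<Sum>u \<in> V. f u * degree V E u) \<le> (\<Sum>u \<in> V. f u * max_degree V E)"
  proof (rule sum_mono)
    fix u assume "u \<in> V"
    then have "degree V E u \<le> max_degree V E" unfolding max_degree_def using fin by simp
    then show "f u * degree V E u \<le> f u * max_degree V E" by simp
  qed
  finally show ?thesis by (simp add: sum_distrib_right[symmetric] algebra_simps)
qed

lemma upper_dom:
  assumes "simple_graph V E" "dominating_set V E D"
  shows "dom210_number V E \<le> 2 * card D"
proof -
  have fin: "finite V" using assms by (simp add: simple_graph_def)
  define f where "f = (\<lambda>v. if v \<in> D then 2 else (0::nat))"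
  have "dom210_function V E f"
    unfolding dom210_function_def
  proof (intro ballI conjI impI)
    fix v assume v: "v \<in> V"
    show "f v \<le> 2" by (simp add: f_def)
    show "f v = 1 \<Longrightarrow> 1 \<le> sum f (nbhd V E v)" by (simp add: f_def split: if_splits)
    assume "f v = 0"
    then have "v \<notin> D" by (simp add: f_def split: if_splits)
    then obtain u where u: "u \<in> nbhd V E v" "u \<in> D"
      using assms(2) v unfolding dominating_set_def cnbhd_def by blast
    have "finite (nbhd V E v)" using fin unfolding nbhd_def by simp
    then have "f u \<le> sum f (nbhd V E v)" using u(1) by (intro member_le_sum) auto
    then show "2 \<le> sum f (nbhd V E v)" using u(2) by (simp add: f_def)
  qed
  then have "dom210_number V E \<le> (\<Sum>v \<in> V. f v)" by (rule le210[OF assms(1)])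
  also have "(\<Sum>v \<in> V. f v) = 2 * card D"
  proof -
    have "D \<subseteq> V" using assms(2) by (simp add: dominating_set_def)
    then have "V \<inter> D = D" by blast
    then show ?thesis unfolding f_def by (simp add: sum.If_cases fin)
  qed
  finally show ?thesis .
qed


lemma leaf_nb:
  assumes "simple_graph V E" "v \<in> leaves V E"
  obtains u where "nbhd V E v = {u}"
proof -
  have "card (nbhd V E v) = 1" using assms(2) unfolding leaves_def degree_def by auto
  then show ?thesis using that card_1_singletonE by blast
qed

lemma leaf_in_dd:
  assumes "simple_graph V E" "double_dominating_set V E D" "v \<in> V" "nbhd V E v = {u}"
  shows "v \<in> D \<and> u \<in> D"
proof (rule ccontr)
  assume "\<not> (v \<in> D \<and> u \<in> D)"
  then have "cnbhd V E v \<inter> D \<subseteq> {u} \<or> cnbhd V E v \<inter> D \<subseteq> {v}"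
    using assms(4) unfolding cnbhd_def by auto
  then obtain x where "cnbhd V E v \<inter> D \<subseteq> {x}" by blast
  then have "card (cnbhd V E v \<inter> D) \<le> card {x}" by (intro card_mono) auto
  then have "card (cnbhd V E v \<inter> D) \<le> 1" by simp
  then show False using assms(2,3) unfolding double_dominating_set_def by fastforce
qed

lemma upper_dd:
  assumes "simple_graph V E" "double_dominating_set V E D"
  shows "dom210_number V E + card (leaves V E) \<le> card D + card (supports V E)"
proof -
  have fin: "finite V" using assms by (simp add: simple_graph_def)
  have sym: "\<And>u v. E u v \<Longrightarrow> E v u" and inV: "\<And>u v. E u v \<Longrightarrow> u \<in> V \<and> v \<in> V"
    using assms(1) unfolding simple_graph_def by blast+
  define L where "L = leaves V E"
  define S where "S = supports V E"
  have DV: "D \<subseteq> V" using assms(2) by (simp add: double_dominating_set_def)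
  have LV: "L \<subseteq> V" by (auto simp: L_def leaves_def)
  have LD: "L \<subseteq> D"
  proof
    fix v assume v: "v \<in> L"
    then obtain u where "nbhd V E v = {u}" using leaf_nb[OF assms(1)] L_def by blast
    then show "v \<in> D" using leaf_in_dd[OF assms] v LV by blast
  qed
  have SD: "S \<subseteq> D"
  proof
    fix v assume "v \<in> S"
    then obtain w where w: "w \<in> L" "E v w" by (auto simp: S_def supports_def L_def)
    then obtain u where u: "nbhd V E w = {u}" using leaf_nb[OF assms(1)] L_def by blast
    have "v \<in> nbhd V E w" using w inV sym by (auto simp: nbhd_def)
    then have "v = u" using u by auto
    then show "v \<in> D" using leaf_in_dd[OF assms _ u] w LV by blast
  qed
  have supI: "v \<in> S" if "v \<in> V" "u \<in> L" "E v u" for u v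
    using that by (auto simp: S_def supports_def L_def)
  define f where "f = (\<lambda>v. if v \<in> S - L then 2 else if v \<in> L - S then 0 else if v \<in> D then 1 else (0::nat))"
  have zero: "v \<in> S" if "v \<in> V" "u \<in> nbhd V E v" "u \<in> D" "f u = 0" for u v
  proof -
    have "u \<in> L" using that(3,4) by (auto simp: f_def split: if_splits)
    then show ?thesis using that(1,2) supI by (auto simp: nbhd_def)
  qed
  have finN: "finite (nbhd V E v)" for v using fin by (simp add: nbhd_def)
  have "dom210_function V E f"
    unfolding dom210_function_def
  proof (intro ballI conjI impI)
    fix v assume v: "v \<in> V"
    show "f v \<le> 2" by (simp add: f_def)
  next
    fix v assume v: "v \<in> V" and f0: "f v = 0"
    show "2 \<le> sum f (nbhd V E v)"
    proof (cases "v \<in> L - S")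
      case True
      then obtain u where u: "nbhd V E v = {u}" using leaf_nb[OF assms(1)] L_def by blast
      then have Evu: "E v u" and uV: "u \<in> V" by (auto simp: nbhd_def)
      have "u \<in> S" using supI[OF uV _ sym[OF Evu]] True by blast
      moreover have "u \<notin> L" using supI[OF v _ Evu] True by blast
      ultimately show ?thesis using u by (simp add: f_def)
    next
      case False
      then have vD: "v \<notin> D" using f0 SD by (auto simp: f_def split: if_splits)
      have "cnbhd V E v \<inter> D = nbhd V E v \<inter> D" using vD by (auto simp: cnbhd_def)
      then have c2: "2 \<le> card (nbhd V E v \<inter> D)"
        using assms(2) v unfolding double_dominating_set_def by auto
      have "card (nbhd V E v \<inter> D) = (\<Sum>u \<in> nbhd V E v \<inter> D. 1::nat)" by simp
      also have "\<dots> \<le> (\<Sum>u \<in> nbhd V E v \<inter> D. f u)"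
      proof (rule sum_mono)
        fix u assume u: "u \<in> nbhd V E v \<inter> D"
        show "1 \<le> f u"
        proof (rule ccontr)
          assume "\<not> 1 \<le> f u"
          then have "v \<in> S" using zero[OF v] u by auto
          then show False using vD SD by blast
        qed
      qed
      also have "\<dots> \<le> sum f (nbhd V E v)" by (rule sum_mono2[OF finN]) auto
      finally show ?thesis using c2 by linarith
    qed
  next
    fix v assume v: "v \<in> V" and f1: "f v = 1"
    show "1 \<le> sum f (nbhd V E v)"
    proof (cases "v \<in> L")
      case True
      then have vS: "v \<in> S" using f1 by (auto simp: f_def split: if_splits)
      obtain u where u: "nbhd V E v = {u}" using leaf_nb[OF assms(1)] True L_def by blast
      then have Evu: "E v u" and uV: "u \<in> V" by (auto simp: nbhd_def)
      obtain w where w: "w \<in> L" "E v w" using vS by (auto simp: S_def supports_def L_def)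
      have "w = u" using w u inV by (auto simp: nbhd_def)
      then have "u \<in> L" using w by simp
      moreover have "u \<in> S" using supI[OF uV True sym[OF Evu]] .
      ultimately have "f u = 1" using SD by (auto simp: f_def)
      then show ?thesis using u by simp
    next
      case False
      then have vD: "v \<in> D" and vS: "v \<notin> S" using f1 by (auto simp: f_def split: if_splits)
      have "2 \<le> card (cnbhd V E v \<inter> D)"
        using assms(2) v unfolding double_dominating_set_def by auto
      then have "cnbhd V E v \<inter> D \<noteq> {v}" by auto
      then obtain u where u: "u \<in> nbhd V E v" "u \<in> D" using vD by (auto simp: cnbhd_def)
      have "f u \<noteq> 0" using zero[OF v u] vS by blast
      moreover have "f u \<le> sum f (nbhd V E v)" by (rule member_le_sum[OF u(1) _ finN]) simp
      ultimately show ?thesis by linarith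
    qed
  qed
  then have w: "dom210_number V E \<le> (\<Sum>v \<in> V. f v)" by (rule le210[OF assms(1)])
  have fpt: "f v = (if v \<in> S - L then 2 else 0) + (if v \<in> D - (L \<union> S) then 1 else 0)
      + (if v \<in> L \<inter> S then 1 else 0)" for v
    using LD SD by (auto simp: f_def)
  have ind: "(\<Sum>v \<in> V. if v \<in> A then c else 0) = c * card A" if "A \<subseteq> V" for A and c :: nat
  proof -
    have "V \<inter> A = A" using that by blast
    then show ?thesis by (simp add: sum.If_cases fin)
  qed
  have "(\<Sum>v \<in> V. f v) = 2 * card (S - L) + card (D - (L \<union> S)) + card (L \<inter> S)"
  proof -
    have i1: "(\<Sum>v \<in> V. if v \<in> S - L then 2 else 0) = 2 * card (S - L)"
      by (rule ind) (use SD DV in blast)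
    have i2: "(\<Sum>v \<in> V. if v \<in> D - (L \<union> S) then 1 else 0) = 1 * card (D - (L \<union> S))"
      by (rule ind) (use SD DV in blast)
    have i3: "(\<Sum>v \<in> V. if v \<in> L \<inter> S then 1 else 0) = 1 * card (L \<inter> S)"
      by (rule ind) (use SD DV in blast)
    show ?thesis unfolding fpt sum.distrib i1 i2 i3 by simp
  qed
  moreover have "card (D - (L \<union> S)) + card (L \<union> S) = card D"
  proof -
    have fD: "finite D" using DV fin by (rule finite_subset)
    have sub: "L \<union> S \<subseteq> D" using LD SD by (rule Un_least)
    have fLS: "finite (L \<union> S)" using sub fD by (rule finite_subset)
    have e1: "card (D - (L \<union> S)) = card D - card (L \<union> S)" using fLS sub by (rule card_Diff_subset)
    have e2: "card (L \<union> S) \<le> card D" using fD sub by (rule card_mono)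
    show ?thesis using e1 e2 by simp
  qed
  moreover have "card (S - L) + card (L \<inter> S) = card S"
  proof -
    have "finite S" using finite_subset[OF SD finite_subset[OF DV fin]] .
    then show ?thesis using card_Int_Diff[of S L] by (simp add: Int_commute)
  qed
  moreover have "card (L \<union> S) + card (L \<inter> S) = card L + card S"
    using card_Un_Int[OF finite_subset[OF LD finite_subset[OF DV fin]] finite_subset[OF SD finite_subset[OF DV fin]]] by simp
  ultimately show ?thesis using w unfolding L_def[symmetric] S_def[symmetric] by linarith
qed


lemma dd_exists:
  assumes "simple_graph V E" "no_isolated V E"
  obtains D where "double_dominating_set V E D" "double_domination_number V E = card D"
proof -
  have fin: "finite V" using assms by (simp add: simple_graph_def)
  have "double_dominating_set V E V"
    unfolding double_dominating_set_def
  proof (intro conjI ballI)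
    fix v assume v: "v \<in> V"
    then obtain u where u: "u \<in> nbhd V E v" using assms(2) unfolding no_isolated_def by blast
    have "u \<noteq> v" using u assms(1) by (auto simp: nbhd_def simple_graph_def)
    have "{u, v} \<subseteq> cnbhd V E v \<inter> V" using u v by (auto simp: cnbhd_def nbhd_def)
    moreover have "finite (cnbhd V E v \<inter> V)" using fin by simp
    ultimately have "card {u, v} \<le> card (cnbhd V E v \<inter> V)" by (rule card_mono[rotated])
    then show "2 \<le> card (cnbhd V E v \<inter> V)" using \<open>u \<noteq> v\<close> by simp
  qed simp
  then have ne: "{card D | D. double_dominating_set V E D} \<noteq> {}" by blast
  have "{card D | D. double_dominating_set V E D} \<subseteq> card ` Pow V"
    by (auto simp: double_dominating_set_def)
  then have "finite {card D | D. double_dominating_set V E D}"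
    using fin finite_subset by blast
  then have "double_domination_number V E \<in> {card D | D. double_dominating_set V E D}"
    unfolding double_domination_number_def using ne by (rule Min_in)
  then show ?thesis using that by auto
qed

lemma dom_exists:
  assumes "simple_graph V E"
  obtains D where "dominating_set V E D" "domination_number V E = card D"
proof -
  have fin: "finite V" using assms by (simp add: simple_graph_def)
  have "dominating_set V E V" by (auto simp: dominating_set_def cnbhd_def)
  then have ne: "{card D | D. dominating_set V E D} \<noteq> {}" by blast
  have "{card D | D. dominating_set V E D} \<subseteq> card ` Pow V"
    by (auto simp: dominating_set_def)
  then have "finite {card D | D. dominating_set V E D}"
    using fin finite_subset by blast
  then have "domination_number V E \<in> {card D | D. dominating_set V E D}"
    unfolding domination_number_def using ne by (rule Min_in)
  then show ?thesis using that by auto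
qed

theorem theorem36:
  fixes V :: "'a set" and E :: "'a \<Rightarrow> 'a \<Rightarrow> bool"
  assumes "simple_graph V E" and "no_isolated V E"
  shows "\<lceil>2 * real (card V) / (real (max_degree V E) + 1)\<rceil> \<le> int (dom210_number V E)
    \<and> int (dom210_number V E) \<le> min (int (double_domination_number V E)
          - int (card (leaves V E)) + int (card (supports V E)))
        (2 * int (domination_number V E))"
proof -
  obtain f where f: "dom210_function V E f" "dom210_number V E = (\<Sum>v \<in> V. f v)"
    using ex210[OF assms(1)] by blast
  have "2 * card V \<le> (max_degree V E + 1) * dom210_number V E"
    using lower[OF assms(1) f(1)] f(2) by simp
  then have "real (2 * card V) \<le> real ((max_degree V E + 1) * dom210_number V E)"
    by (simp only: of_nat_le_iff)
  then have "2 * real (card V) \<le> real (dom210_number V E) * (real (max_degree V E) + 1)"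
    by (simp add: algebra_simps)
  then have "2 * real (card V) / (real (max_degree V E) + 1) \<le> real (dom210_number V E)"
    by (simp add: pos_divide_le_eq add_pos_nonneg)
  then have A: "\<lceil>2 * real (card V) / (real (max_degree V E) + 1)\<rceil> \<le> int (dom210_number V E)"
    by (simp add: ceiling_le_iff)
  obtain D where D: "double_dominating_set V E D" "double_domination_number V E = card D"
    using dd_exists[OF assms] by blast
  obtain D' where D': "dominating_set V E D'" "domination_number V E = card D'"
    using dom_exists[OF assms(1)] by blast
  have "dom210_number V E + card (leaves V E) \<le> card D + card (supports V E)"
    using upper_dd[OF assms(1) D(1)] .
  then have B: "int (dom210_number V E) \<le> int (double_domination_number V E)
          - int (card (leaves V E)) + int (card (supports V E))" using D(2) by linarith
  have C: "int (dom210_number V E) \<le> 2 * int (domination_number V E)"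
    using upper_dom[OF assms(1) D'(1)] D'(2) by linarith
  show ?thesis using A B C by simp
qed

end
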